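(* Let $n,p\ge 1$, let $\mathbf{X}\in\mathbb{R}^{n\times p}$ be a fixed (deterministic) design matrix, $\beta^0\in\mathbb{R}^p$, and $\mathbf{Y}=\mathbf{X}\beta^0+\varepsilon$, where $\varepsilon_1,\ldots,\varepsilon_n$ are i.i.d. with $\mathbb{E}[\varepsilon_i]=0$ and $\mathrm{Var}(\varepsilon_i)=\sigma^2<\infty$. Let $\lambda>0$ and let $\hat\beta=\hat\beta(\lambda)=(\hat\Sigma+\lambda I_p)^{-1}n^{-1}\mathbf{X}^T\mathbf{Y}$ be the Ridge estimator. Assume $\Omega_{\min}(\lambda)>0$. Then $$\max_{j\in\{1,\ldots,p\}}\big|\mathbb{E}[\hat\beta_j]-\theta^0_j\big|\le \lambda\,\|\theta^0\|_2\,\lambda_{\min\neq 0}(\hat\Sigma)^{-1},\qquad \min_{j\in\{1,\ldots,p\}}\mathrm{Var}(\hat\beta_j)\ge n^{-1}\sigma^2\,\Omega_{\min}(\lambda).$$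
   Context: $\hat\Sigma=n^{-1}\mathbf{X}^T\mathbf{X}$. $P_{\mathbf{X}}=\mathbf{X}^T(\mathbf{X}\mathbf{X}^T)^{-}\mathbf{X}$, where $A^{-}$ is the Moore–Penrose pseudo-inverse; $P_{\mathbf{X}}$ is the orthogonal projection of $\mathbb{R}^p$ onto the row space of $\mathbf{X}$. $\theta^0=P_{\mathbf{X}}\beta^0$. $\Omega(\lambda)=(\hat\Sigma+\lambda I_p)^{-1}\hat\Sigma(\hat\Sigma+\lambda I_p)^{-1}$ and $\Omega_{\min}(\lambda)=\min_{1\le j\le p}\Omega_{jj}(\lambda)$. For a symmetric matrix $A$, $\lambda_{\min\neq0}(A)$ denotes its smallest nonzero eigenvalue. *)

theory Defs
  imports "HOL-Probability.Probability"
begin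

definition pinv :: "real^'n^'m \<Rightarrow> real^'m^'n" where
  "pinv A = (THE B. A ** B ** A = A \<and> B ** A ** B = B \<and>
                    transpose (A ** B) = A ** B \<and> transpose (B ** A) = B ** A)"

definition Sigma_hat :: "real^'p^'n \<Rightarrow> real^'p^'p" where
  "Sigma_hat X = (1 / real CARD('n)) *\<^sub>R (transpose X ** X)"

definition proj_X :: "real^'p^'n \<Rightarrow> real^'p^'p" where
  "proj_X X = transpose X ** pinv (X ** transpose X) ** X"

definition theta0 :: "real^'p^'n \<Rightarrow> real^'p \<Rightarrow> real^'p" where
  "theta0 X \<beta>0 = proj_X X *v \<beta>0"

definition ridge :: "real^'p^'n \<Rightarrow> real \<Rightarrow> real^'n \<Rightarrow> real^'p" where
  "ridge X lam Y = matrix_inv (Sigma_hat X + lam *\<^sub>R mat 1) *v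
                    ((1 / real CARD('n)) *\<^sub>R (transpose X *v Y))"

definition Omega :: "real^'p^'n \<Rightarrow> real \<Rightarrow> real^'p^'p" where
  "Omega X lam = matrix_inv (Sigma_hat X + lam *\<^sub>R mat 1) ** Sigma_hat X **
                matrix_inv (Sigma_hat X + lam *\<^sub>R mat 1)"

definition Omega_min :: "real^'p^'n \<Rightarrow> real \<Rightarrow> real" where
  "Omega_min X lam = Min (range (\<lambda>j. Omega X lam $ j $ j))"

definition is_eigenvalue :: "real^'p^'p \<Rightarrow> real \<Rightarrow> bool" where
  "is_eigenvalue A \<mu> \<longleftrightarrow> (\<exists>v. v \<noteq> 0 \<and> A *v v = \<mu> *\<^sub>R v)"

definition lambda_min_nz :: "real^'p^'p \<Rightarrow> real" where
  "lambda_min_nz A = Min {\<mu>. \<mu> \<noteq> 0 \<and> is_eigenvalue A \<mu>}"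

end

theory Submission
  imports Defs
begin


lemma mm_add_r: "((A::real^'n^'m) + B) ** C = A ** C + B ** C"
  by (simp add: matrix_matrix_mult_def vec_eq_iff algebra_simps sum.distrib)
lemma mm_add_l: "(C::real^'n^'m) ** (A + B) = C ** A + C ** B"
  by (simp add: matrix_matrix_mult_def vec_eq_iff algebra_simps sum.distrib)
lemma mm_diff_r: "((A::real^'n^'m) - B) ** C = A ** C - B ** C"
  by (simp add: matrix_matrix_mult_def vec_eq_iff algebra_simps sum_subtractf)
lemma mm_diff_l: "(C::real^'n^'m) ** (A - B) = C ** A - C ** B"
  by (simp add: matrix_matrix_mult_def vec_eq_iff algebra_simps sum_subtractf)
lemma transpose_add': "transpose ((A::real^'n^'m) + B) = transpose A + transpose B"
  by (simp add: transpose_def vec_eq_iff)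
lemma transpose_diff': "transpose ((A::real^'n^'m) - B) = transpose A - transpose B"
  by (simp add: transpose_def vec_eq_iff)
lemma mm_zero_l[simp]: "(0::real^'n^'m) ** A = 0"
  by (simp add: matrix_matrix_mult_def vec_eq_iff)
lemma mm_zero_r[simp]: "(A::real^'n^'m) ** 0 = 0"
  by (simp add: matrix_matrix_mult_def vec_eq_iff)
lemma transpose_zero'[simp]: "transpose (0::real^'n^'m) = 0"
  by (simp add: transpose_def vec_eq_iff)
lemma inner_mv: "(x::real^'m) \<bullet> ((M::real^'n^'m) *v y) = (transpose M *v x) \<bullet> y"
  by (metis dot_lmul_matrix transpose_matrix_vector)

lemma matrix_inv_both:
  fixes A :: "real^'n^'n" assumes "invertible A"
  shows "A ** matrix_inv A = mat 1" "matrix_inv A ** A = mat 1"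
  using someI_ex[OF assms[unfolded invertible_def]] unfolding matrix_inv_def by auto

definition penrose :: "real^'n^'m \<Rightarrow> real^'m^'n \<Rightarrow> bool" where
  "penrose A B \<longleftrightarrow> A ** B ** A = A \<and> B ** A ** B = B \<and>
                    transpose (A ** B) = A ** B \<and> transpose (B ** A) = B ** A"

lemma penrose_unique:
  assumes p1: "penrose A B1" and p2: "penrose A B2" shows "B1 = B2"
proof -
  from p1 have a1: "A ** B1 ** A = A" "B1 ** A ** B1 = B1" "transpose (A ** B1) = A ** B1"
    "transpose (B1 ** A) = B1 ** A" by (auto simp: penrose_def)
  from p2 have a2: "A ** B2 ** A = A" "B2 ** A ** B2 = B2" "transpose (A ** B2) = A ** B2"
    "transpose (B2 ** A) = B2 ** A" by (auto simp: penrose_def)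
  have "B1 = B1 ** (A ** B1)" using a1 by (simp add: matrix_mul_assoc)
  also have "\<dots> = B1 ** transpose (A ** B1)" using a1 by simp
  also have "\<dots> = B1 ** transpose B1 ** transpose A" by (simp add: matrix_transpose_mul matrix_mul_assoc)
  also have "\<dots> = B1 ** transpose B1 ** transpose (A ** B2 ** A)" using a2 by simp
  also have "\<dots> = B1 ** (transpose (A ** B1) ** transpose (A ** B2))"
    by (simp add: matrix_transpose_mul matrix_mul_assoc)
  also have "\<dots> = B1 ** (A ** B1 ** (A ** B2))" using a1 a2 by simp
  also have "\<dots> = B1 ** A ** B2" using a1 by (metis matrix_mul_assoc)
  finally have e1: "B1 = B1 ** A ** B2" .
  have "B2 = (B2 ** A) ** B2" using a2 by simp
  also have "\<dots> = transpose (B2 ** A) ** B2" using a2 by simp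
  also have "\<dots> = transpose A ** transpose B2 ** B2" by (simp add: matrix_transpose_mul)
  also have "\<dots> = transpose (A ** B1 ** A) ** transpose B2 ** B2" using a1 by simp
  also have "\<dots> = (transpose (B1 ** A) ** transpose (B2 ** A)) ** B2"
    by (simp add: matrix_transpose_mul matrix_mul_assoc)
  also have "\<dots> = (B1 ** A ** (B2 ** A)) ** B2" using a1 a2 by simp
  also have "\<dots> = B1 ** A ** B2" using a2 by (metis matrix_mul_assoc)
  finally show ?thesis using e1 by simp
qed



lemma penrose_exists_gram:
  fixes X :: "real^'p^'n"
  defines "A \<equiv> X ** transpose X"
  shows "\<exists>B. penrose A B"
proof -
  have Asym: "transpose A = A" unfolding A_def by (simp add: matrix_transpose_mul)
  have psd: "x \<bullet> (A *v x) = (transpose X *v x) \<bullet> (transpose X *v x)" for x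
    unfolding A_def by (simp add: inner_mv matrix_vector_mul_assoc[symmetric])
  define N where "N = {x. A *v x = 0}"
  have subN: "subspace N" unfolding N_def subspace_def
    by (auto simp: matrix_vector_right_distrib matrix_vector_mult_scaleR)
  obtain E where EN: "E \<subseteq> N" and orth: "pairwise orthogonal E"
     and n1: "\<And>x. x \<in> E \<Longrightarrow> norm x = 1" and ind: "independent E" and spE: "span E = N"
    using orthonormal_basis_subspace[OF subN] by blast
  have finE: "finite E" using ind independent_imp_finite by blast
  define Q :: "real^'n^'n" where "Q = (\<chi> i j. \<Sum>e\<in>E. e$i * e$j)"
  have Qv: "Q *v x = (\<Sum>e\<in>E. (e \<bullet> x) *\<^sub>R e)" for x
    unfolding Q_def
    by (simp add: vec_eq_iff matrix_vector_mult_def inner_vec_def sum_component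
        sum_distrib_left sum_distrib_right mult.commute mult.left_commute)
       (subst sum.swap, simp add: mult.commute mult.left_commute)
  have Qsym: "transpose Q = Q" unfolding Q_def by (simp add: transpose_def vec_eq_iff mult.commute)
  have QN: "Q *v x \<in> N" for x
    unfolding Qv spE[symmetric] by (intro span_sum span_mul span_base) auto
  have Qe: "Q *v e = e" if "e \<in> E" for e
  proof -
    have "(\<Sum>e'\<in>E. (e' \<bullet> e) *\<^sub>R e') = (\<Sum>e'\<in>E. if e' = e then e else 0)"
    proof (rule sum.cong)
      fix e' assume "e' \<in> E"
      show "(e' \<bullet> e) *\<^sub>R e' = (if e' = e then e else 0)"
      proof (cases "e' = e")
        case True then show ?thesis using n1[OF that] by (simp add: norm_eq_1)
      next
        case False then show ?thesis using orth \<open>e' \<in> E\<close> that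
          by (simp add: pairwise_def orthogonal_def)
      qed
    qed simp
    then show ?thesis using that finE by (simp add: Qv)
  qed
  have QxN: "Q *v x = x" if "x \<in> N" for x
  proof -
    have "x \<in> span E" using that spE by simp
    then show ?thesis
    proof (induct rule: span_induct)
      case base show ?case unfolding subspace_def
        by (auto simp: matrix_vector_right_distrib matrix_vector_mult_scaleR)
    next
      case (step x) then show ?case using Qe by simp
    qed
  qed
  have AQ: "A ** Q = 0" unfolding matrix_eq
    using QN by (simp add: matrix_vector_mul_assoc[symmetric] N_def)
  have QA: "Q ** A = 0"
    by (metis AQ Asym Qsym matrix_transpose_mul transpose_zero')
  have QQ: "Q ** Q = Q" unfolding matrix_eq
    using QN QxN by (simp add: matrix_vector_mul_assoc[symmetric])
  have Qpos: "x \<bullet> (Q *v x) = (\<Sum>e\<in>E. (e \<bullet> x)^2)" for x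
    by (simp add: Qv inner_sum_right power2_eq_square inner_commute)
  define C where "C = A + Q"
  have Cinj: "x = 0" if "C *v x = 0" for x
  proof -
    have "x \<bullet> (A *v x + Q *v x) = 0" using that
      by (simp add: C_def matrix_vector_mult_add_rdistrib)
    then have "x \<bullet> (A *v x) + x \<bullet> (Q *v x) = 0" by (simp add: inner_add_right)
    moreover have "x \<bullet> (A *v x) \<ge> 0" using psd by simp
    moreover have "x \<bullet> (Q *v x) \<ge> 0" by (simp add: Qpos sum_nonneg)
    ultimately have "x \<bullet> (A *v x) = 0" "x \<bullet> (Q *v x) = 0" by linarith+
    then have "transpose X *v x = 0" using psd by simp
    then have "A *v x = 0" unfolding A_def by (simp add: matrix_vector_mul_assoc[symmetric])
    then have "Q *v x = x" using QxN N_def by simp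
    with \<open>x \<bullet> (Q *v x) = 0\<close> show "x = 0" by simp
  qed
  have Cinv: "invertible C"
    using Cinj by (simp add: invertible_left_inverse matrix_left_invertible_ker)
  define Ci where "Ci = matrix_inv C"
  have CiC: "Ci ** C = mat 1" "C ** Ci = mat 1"
    using matrix_inv_both[OF Cinv] by (auto simp: Ci_def)
  have QC: "Q ** C = Q" by (simp add: C_def mm_add_l QA QQ)
  have CQ: "C ** Q = Q" by (simp add: C_def mm_add_r AQ QQ)
  have QCi: "Q ** Ci = Q" by (metis QC CiC(2) matrix_mul_assoc matrix_mul_rid)
  have CiQ: "Ci ** Q = Q" by (metis CQ CiC(1) matrix_mul_assoc matrix_mul_lid)
  define G where "G = Ci - Q"
  have AC: "A = C - Q" by (simp add: C_def)
  have AG: "A ** G = mat 1 - Q"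
    by (simp add: G_def mm_diff_l AQ, simp add: AC mm_diff_r CiC QCi)
  have GA: "G ** A = mat 1 - Q"
    by (simp add: G_def mm_diff_r QA, simp add: AC mm_diff_l CiC CiQ)
  have "penrose A G"
    unfolding penrose_def
  proof (intro conjI)
    show "A ** G ** A = A" by (simp add: AG mm_diff_r QA)
    show "G ** A ** G = G" by (simp only: GA) (simp add: mm_diff_r G_def mm_diff_l QCi QQ)
    show "transpose (A ** G) = A ** G" by (simp add: AG transpose_diff' Qsym)
    show "transpose (G ** A) = G ** A" by (simp add: GA transpose_diff' Qsym)
  qed
  then show ?thesis by blast
qed

lemma pinv_gram:
  fixes X :: "real^'p^'n"
  shows "penrose (X ** transpose X) (pinv (X ** transpose X))"
proof -
  obtain B where B: "penrose (X ** transpose X) B" using penrose_exists_gram by blast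
  have "pinv (X ** transpose X) = B" unfolding pinv_def
    unfolding penrose_def[symmetric] using B by (metis penrose_unique the_equality)
  then show ?thesis using B by simp
qed



lemma quad_nonneg_lin0:
  fixes a b :: real
  assumes "\<And>t. a * t + b * t^2 \<ge> 0" shows "a = 0"
proof -
  define d where "d = \<bar>b\<bar> + 1"
  have d: "d > 0" "b \<le> d - 1" unfolding d_def by auto
  have "a * (-a/d) + b * (-a/d)^2 \<ge> 0" by (rule assms)
  then have "(a * (-a/d) + b * (-a/d)^2) * d^2 \<ge> 0" using d by simp
  moreover have "(a * (-a/d) + b * (-a/d)^2) * d^2 = a^2 * (b - d)"
    using d by (simp add: field_simps power2_eq_square)
  ultimately have "a^2 * (b - d) \<ge> 0" by simp
  moreover have "b - d < 0" using d by simp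
  ultimately have "a^2 \<le> 0" by (simp add: mult_nonneg_nonpos2 zero_le_mult_iff)
  then show ?thesis by simp
qed

lemma sym_inner:
  fixes S :: "real^'n^'n" assumes "transpose S = S"
  shows "x \<bullet> (S *v y) = (S *v x) \<bullet> y"
  using inner_mv[of x S y] assms by simp

lemma eigen_finite:
  fixes S :: "real^'n^'n" assumes sym: "transpose S = S"
  shows "finite {\<mu>. is_eigenvalue S \<mu>}"
proof -
  let ?Ev = "{\<mu>. is_eigenvalue S \<mu>}"
  define g where "g \<mu> = (SOME v. v \<noteq> 0 \<and> S *v v = \<mu> *\<^sub>R v)" for \<mu>
  have g: "g \<mu> \<noteq> 0 \<and> S *v g \<mu> = \<mu> *\<^sub>R g \<mu>" if "\<mu> \<in> ?Ev" for \<mu>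
  proof -
    from that obtain v where "v \<noteq> 0 \<and> S *v v = \<mu> *\<^sub>R v" unfolding is_eigenvalue_def by auto
    then show ?thesis unfolding g_def by (rule someI)
  qed
  have inj: "inj_on g ?Ev"
  proof (rule inj_onI)
    fix a b assume a: "a \<in> ?Ev" and b: "b \<in> ?Ev" and e: "g a = g b"
    have "a *\<^sub>R g a = b *\<^sub>R g a" using g[OF a] g[OF b] e by metis
    then show "a = b" using g[OF a] by (simp add: scaleR_cancel_right)
  qed
  have orth: "pairwise orthogonal (g ` ?Ev)"
    unfolding pairwise_def orthogonal_def
  proof (intro ballI impI)
    fix x y assume x: "x \<in> g ` ?Ev" and y: "y \<in> g ` ?Ev" and ne: "x \<noteq> y"
    obtain a b where a: "a \<in> ?Ev" and b: "b \<in> ?Ev" and xa: "x = g a" and yb: "y = g b"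
      using x y by blast
    then have "a \<noteq> b" using ne by auto
    have "a * (g a \<bullet> g b) = (S *v g a) \<bullet> g b" using g[OF a] by simp
    also have "\<dots> = g a \<bullet> (S *v g b)" using sym_inner[OF sym] by simp
    also have "\<dots> = b * (g a \<bullet> g b)" using g[OF b] by simp
    finally show "x \<bullet> y = 0" using \<open>a \<noteq> b\<close> xa yb by simp
  qed
  have "0 \<notin> g ` ?Ev" using g by auto
  then have "independent (g ` ?Ev)" using pairwise_orthogonal_independent orth by blast
  then have "finite (g ` ?Ev)" using independent_imp_finite by blast
  then show ?thesis using finite_imageD inj by blast
qed

lemma sigma_hat_facts:
  fixes X :: "real^'p^'n"
  shows "transpose (Sigma_hat X) = Sigma_hat X"
    and "x \<bullet> (Sigma_hat X *v x) = (1 / real CARD('n)) * ((X *v x) \<bullet> (X *v x))"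
    and "Sigma_hat X *v x = transpose X *v ((1 / real CARD('n)) *\<^sub>R (X *v x))"
proof -
  let ?c = "1 / real CARD('n)"
  show "transpose (Sigma_hat X) = Sigma_hat X" unfolding Sigma_hat_def
    by (simp add: transpose_scalar matrix_transpose_mul)
  have e: "Sigma_hat X *v x = ?c *\<^sub>R (transpose X *v (X *v x))" for x
    unfolding Sigma_hat_def
    by (simp only: scaleR_matrix_vector_assoc[symmetric] matrix_vector_mul_assoc)
  show "Sigma_hat X *v x = transpose X *v (?c *\<^sub>R (X *v x))"
    by (simp only: e matrix_vector_mult_scaleR)
  have "x \<bullet> (transpose X *v (X *v x)) = (X *v x) \<bullet> (X *v x)"
    using inner_mv[of x "transpose X" "X *v x"] by (simp only: transpose_transpose)
  then show "x \<bullet> (Sigma_hat X *v x) = ?c * ((X *v x) \<bullet> (X *v x))"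
    by (simp only: e inner_scaleR_right)
qed



lemma rayleigh:
  fixes X :: "real^'p^'n"
  assumes u: "u = transpose X *v w0" and u0: "u \<noteq> 0"
  shows "\<exists>c. c \<noteq> 0 \<and> is_eigenvalue (Sigma_hat X) c \<and> c * (u \<bullet> u) \<le> u \<bullet> (Sigma_hat X *v u)"
proof -
  let ?S = "Sigma_hat X"
  let ?T = "transpose X"
  define R where "R = range (\<lambda>z. ?T *v z)"
  define f where "f x = x \<bullet> (?S *v x)" for x
  have sym: "transpose ?S = ?S" by (rule sigma_hat_facts(1))
  have subR: "subspace R" unfolding R_def subspace_def
  proof (intro conjI ballI allI)
    show "0 \<in> range (\<lambda>z. ?T *v z)" by (metis matrix_vector_mult_0_right rangeI)
    fix x y assume "x \<in> range (\<lambda>z. ?T *v z)" "y \<in> range (\<lambda>z. ?T *v z)"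
    then obtain a b where "x = ?T *v a" "y = ?T *v b" by auto
    then show "x + y \<in> range (\<lambda>z. ?T *v z)"
      by (metis matrix_vector_right_distrib rangeI)
  next
    fix c x assume "x \<in> range (\<lambda>z. ?T *v z)"
    then obtain a where "x = ?T *v a" by auto
    then show "c *\<^sub>R x \<in> range (\<lambda>z. ?T *v z)"
      by (metis matrix_vector_mult_scaleR rangeI)
  qed
  have SR: "?S *v x \<in> R" for x unfolding R_def using sigma_hat_facts(3) by blast
  define K where "K = R \<inter> sphere 0 1"
  have cK: "compact K" unfolding K_def
    using closed_subspace[OF subR] compact_sphere by blast
  have uR: "u \<in> R" using u R_def by auto
  have "(1 / norm u) *\<^sub>R u \<in> K" unfolding K_def using uR u0 subR
    by (simp add: subspace_scale)
  then have neK: "K \<noteq> {}" by blast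
  have cf: "continuous_on K f" unfolding f_def
    by (intro continuous_intros linear_continuous_on linear_conv_bounded_linear[THEN iffD1]
        matrix_vector_mul_linear)
  obtain v where vK: "v \<in> K" and vmin: "\<And>y. y \<in> K \<Longrightarrow> f v \<le> f y"
    using continuous_attains_inf[OF cK neK cf] by blast
  define c where "c = f v"
  have vR: "v \<in> R" and vn: "norm v = 1" using vK K_def by auto
  have vv: "v \<bullet> v = 1" using vn by (simp add: norm_eq_1)
  have fscale: "f (a *\<^sub>R x) = a^2 * f x" for a x
    by (simp add: f_def matrix_vector_mult_scaleR power2_eq_square)
  have bound: "c * (y \<bullet> y) \<le> f y" if "y \<in> R" for y
  proof (cases "y = 0")
    case True then show ?thesis by (simp add: f_def)
  next
    case False
    have "(1 / norm y) *\<^sub>R y \<in> K" unfolding K_def using that False subR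
      by (simp add: subspace_scale)
    then have "c \<le> (1/norm y)^2 * f y" using vmin fscale c_def by metis
    moreover have "y \<bullet> y = (norm y)^2" by (simp add: power2_norm_eq_inner)
    moreover have "norm y > 0" using False by simp
    ultimately show ?thesis by (simp add: field_simps)
  qed
  define w where "w = ?S *v v - c *\<^sub>R v"
  have wR: "w \<in> R" unfolding w_def using SR vR subR
    by (simp add: subspace_diff subspace_scale)
  have "v \<bullet> w = 0" unfolding w_def c_def f_def using vv by (simp add: inner_diff_right)
  then have wv: "w \<bullet> v = 0" by (simp add: inner_commute)
  have fexp: "f (v + t *\<^sub>R w) = f v + 2 * t * (w \<bullet> (?S *v v)) + t^2 * f w" for t
    using sym_inner[OF sym, of v w]
    by (simp add: f_def matrix_vector_right_distrib matrix_vector_mult_scaleR inner_add_left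
        inner_add_right power2_eq_square inner_commute algebra_simps)
  have nexp: "(v + t *\<^sub>R w) \<bullet> (v + t *\<^sub>R w) = 1 + t^2 * (w \<bullet> w)" for t
    using wv vv by (simp add: inner_add_left inner_add_right inner_commute power2_eq_square)
  have "(2 * (w \<bullet> (?S *v v))) * t + (f w - c * (w \<bullet> w)) * t^2 \<ge> 0" for t
  proof -
    have "v + t *\<^sub>R w \<in> R" using vR wR subR by (simp add: subspace_add subspace_scale)
    from bound[OF this] show ?thesis unfolding fexp nexp c_def by (simp add: algebra_simps)
  qed
  then have wSv: "w \<bullet> (?S *v v) = 0" using quad_nonneg_lin0 by fastforce
  have "w \<bullet> w = w \<bullet> (?S *v v) - c * (w \<bullet> v)" unfolding w_def
    by (simp add: inner_diff_right)
  then have "w = 0" using wSv wv by simp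
  then have eig: "?S *v v = c *\<^sub>R v" unfolding w_def by simp
  have "c \<noteq> 0"
  proof
    assume "c = 0"
    then have "(X *v v) \<bullet> (X *v v) = 0" using sigma_hat_facts(2)[where X=X and x=v] unfolding c_def f_def
      by simp
    then have Xv: "X *v v = 0" by simp
    obtain z where z: "v = ?T *v z" using vR R_def by auto
    have "v \<bullet> v = (?T *v z) \<bullet> v" using z by simp
    also have "\<dots> = z \<bullet> (X *v v)" using inner_mv[of z X v] by simp
    finally show False using Xv vv by simp
  qed
  moreover have "is_eigenvalue ?S c" unfolding is_eigenvalue_def using eig vn
    by (intro exI[of _ v]) auto
  moreover have "c * (u \<bullet> u) \<le> u \<bullet> (?S *v u)" using bound[OF uR] f_def by simp
  ultimately show ?thesis by blast
qed



lemma MMt_zero: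
  fixes M :: "real^'p^'n"
  assumes "M ** transpose M = 0" shows "M = 0"
proof -
  have "row i M \<bullet> row i M = 0" for i
    using arg_cong[OF assms, of "\<lambda>Z. Z $ i $ i"] by (simp add: matrix_mult_transpose_dot_row)
  then have "row i M = 0" for i by simp
  then show ?thesis by (simp add: vec_eq_iff row_def)
qed

lemma theta0_facts:
  fixes X :: "real^'p^'n"
  shows "X *v theta0 X \<beta>0 = X *v \<beta>0"
    and "theta0 X \<beta>0 = transpose X *v (pinv (X ** transpose X) *v (X *v \<beta>0))"
proof -
  let ?B = "X ** transpose X" and ?G = "pinv (X ** transpose X)"
  have BGB: "?B ** ?G ** ?B = ?B" and BGs: "transpose (?B ** ?G) = ?B ** ?G"
    using pinv_gram[of X] by (auto simp: penrose_def)
  define M where "M = X - ?B ** ?G ** X"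
  have M: "M = (mat 1 - ?B ** ?G) ** X" by (simp add: M_def mm_diff_r)
  have "M ** transpose M = ((mat 1 - ?B ** ?G) ** ?B) ** transpose (mat 1 - ?B ** ?G)"
    by (simp add: M matrix_transpose_mul matrix_mul_assoc)
  also have "(mat 1 - ?B ** ?G) ** ?B = 0" by (simp add: mm_diff_r BGB)
  finally have "M = 0" using MMt_zero by simp
  then have XB: "?B ** ?G ** X = X" by (simp add: M_def)
  show th: "theta0 X \<beta>0 = transpose X *v (?G *v (X *v \<beta>0))"
    by (simp add: theta0_def proj_X_def matrix_vector_mul_assoc matrix_mul_assoc)
  show "X *v theta0 X \<beta>0 = X *v \<beta>0"
    unfolding th by (simp add: matrix_vector_mul_assoc XB matrix_mul_assoc)
qed



lemma var_lin:
  fixes M :: "'a measure" and \<epsilon> :: "'a \<Rightarrow> real^'n" and a :: "'n \<Rightarrow> real"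
  assumes "prob_space M"
    and meas: "\<And>i. (\<lambda>\<omega>. \<epsilon> \<omega> $ i) \<in> borel_measurable M"
    and indep: "prob_space.indep_vars M (\<lambda>_. borel) (\<lambda>i \<omega>. \<epsilon> \<omega> $ i) UNIV"
    and sq_int: "\<And>i. integrable M (\<lambda>\<omega>. (\<epsilon> \<omega> $ i)\<^sup>2)"
    and mean0: "\<And>i. (\<integral>\<omega>. \<epsilon> \<omega> $ i \<partial>M) = 0"
    and var: "\<And>i. (\<integral>\<omega>. (\<epsilon> \<omega> $ i)\<^sup>2 \<partial>M) = \<sigma>\<^sup>2"
  shows "(\<integral>\<omega>. (\<Sum>i\<in>UNIV. a i * \<epsilon> \<omega> $ i)\<^sup>2 \<partial>M) = \<sigma>\<^sup>2 * (\<Sum>i\<in>UNIV. (a i)\<^sup>2)"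
proof -
  interpret prob_space M by fact
  have int1: "integrable M (\<lambda>\<omega>. \<epsilon> \<omega> $ i)" for i
    by (rule square_integrable_imp_integrable[OF meas sq_int])
  have cross: "integrable M (\<lambda>\<omega>. \<epsilon> \<omega> $ i * \<epsilon> \<omega> $ k) \<and>
      (\<integral>\<omega>. \<epsilon> \<omega> $ i * \<epsilon> \<omega> $ k \<partial>M) = (if i = k then \<sigma>\<^sup>2 else 0)" for i k
  proof (cases "i = k")
    case True then show ?thesis using sq_int[of i] var[of i] by (simp add: power2_eq_square)
  next
    case False
    have ind2: "indep_vars (\<lambda>_. borel) (\<lambda>i \<omega>. \<epsilon> \<omega> $ i) {i, k}"
      using indep_vars_subset[OF indep] by blast
    have p: "(\<Prod>l\<in>{i,k}. \<epsilon> \<omega> $ l) = \<epsilon> \<omega> $ i * \<epsilon> \<omega> $ k" for \<omega> using False by simp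
    have "integrable M (\<lambda>\<omega>. \<Prod>l\<in>{i,k}. \<epsilon> \<omega> $ l)"
      by (rule indep_vars_integrable) (use ind2 int1 in auto)
    moreover have "(\<integral>\<omega>. (\<Prod>l\<in>{i,k}. \<epsilon> \<omega> $ l) \<partial>M) = (\<Prod>l\<in>{i,k}. \<integral>\<omega>. \<epsilon> \<omega> $ l \<partial>M)"
      by (rule indep_vars_lebesgue_integral) (use ind2 int1 in auto)
    ultimately show ?thesis using False mean0 by (simp add: p)
  qed
  have "(\<lambda>\<omega>. (\<Sum>i\<in>UNIV. a i * \<epsilon> \<omega> $ i)\<^sup>2) =
        (\<lambda>\<omega>. \<Sum>i\<in>UNIV. \<Sum>k\<in>UNIV. (a i * a k) * (\<epsilon> \<omega> $ i * \<epsilon> \<omega> $ k))"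
    by (simp add: power2_eq_square sum_product mult_ac)
  then have "(\<integral>\<omega>. (\<Sum>i\<in>UNIV. a i * \<epsilon> \<omega> $ i)\<^sup>2 \<partial>M) =
      (\<Sum>i\<in>UNIV. \<Sum>k\<in>UNIV. (a i * a k) * (\<integral>\<omega>. \<epsilon> \<omega> $ i * \<epsilon> \<omega> $ k \<partial>M))"
    using cross by (simp add: integral_sum integrable_sum)
  also have "\<dots> = (\<Sum>i\<in>UNIV. \<Sum>k\<in>UNIV. (if i = k then a i * a k * \<sigma>\<^sup>2 else 0))"
    using cross by (intro sum.cong) auto
  also have "\<dots> = \<sigma>\<^sup>2 * (\<Sum>i\<in>UNIV. (a i)\<^sup>2)"
    by (simp add: sum_distrib_left power2_eq_square mult_ac)
  finally show ?thesis .
qed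



theorem proposition1:
  fixes M :: "'a measure"
    and X :: "real^'p^'n"
    and \<beta>0 :: "real^'p"
    and \<epsilon> :: "'a \<Rightarrow> real^'n"
    and \<sigma> lam :: real
  assumes "prob_space M"
    and meas: "\<And>i. (\<lambda>\<omega>. \<epsilon> \<omega> $ i) \<in> borel_measurable M"
    and indep: "prob_space.indep_vars M (\<lambda>_. borel) (\<lambda>i \<omega>. \<epsilon> \<omega> $ i) UNIV"
    and ident: "\<And>i j. distr M borel (\<lambda>\<omega>. \<epsilon> \<omega> $ i) = distr M borel (\<lambda>\<omega>. \<epsilon> \<omega> $ j)"
    and sq_int: "\<And>i. integrable M (\<lambda>\<omega>. (\<epsilon> \<omega> $ i)\<^sup>2)"
    and mean0: "\<And>i. (\<integral>\<omega>. \<epsilon> \<omega> $ i \<partial>M) = 0"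
    and var: "\<And>i. (\<integral>\<omega>. (\<epsilon> \<omega> $ i - (\<integral>\<omega>'. \<epsilon> \<omega>' $ i \<partial>M))\<^sup>2 \<partial>M) = \<sigma>\<^sup>2"
    and "lam > 0"
    and "Omega_min X lam > 0"
  defines "Y \<equiv> (\<lambda>\<omega>. X *v \<beta>0 + \<epsilon> \<omega>)"
  defines "\<beta>hat \<equiv> (\<lambda>\<omega>. ridge X lam (Y \<omega>))"
  shows "Max (range (\<lambda>j. \<bar>(\<integral>\<omega>. \<beta>hat \<omega> $ j \<partial>M) - theta0 X \<beta>0 $ j\<bar>))
           \<le> lam * norm (theta0 X \<beta>0) * inverse (lambda_min_nz (Sigma_hat X))
         \<and> Min (range (\<lambda>j. (\<integral>\<omega>. (\<beta>hat \<omega> $ j - (\<integral>\<omega>'. \<beta>hat \<omega>' $ j \<partial>M))\<^sup>2 \<partial>M)))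
           \<ge> \<sigma>\<^sup>2 * Omega_min X lam / real CARD('n)"
proof -
  interpret prob_space M by fact
  have lam: "lam > 0" by fact
  define nn where "nn = real CARD('n)"
  have nn: "nn > 0" unfolding nn_def by simp
  define c where "c = 1 / nn"
  have c: "c > 0" using nn c_def by simp
  define S where "S = Sigma_hat X"
  define T where "T = transpose X"
  define A where "A = S + lam *\<^sub>R mat 1"
  define Ai where "Ai = matrix_inv A"
  define K where "K = Ai ** (c *\<^sub>R T)"
  define G where "G = pinv (X ** transpose X)"
  define \<theta> where "\<theta> = theta0 X \<beta>0"
  have Ssym: "transpose S = S" unfolding S_def by (rule sigma_hat_facts(1))
  have Squad: "x \<bullet> (S *v x) = c * ((X *v x) \<bullet> (X *v x))" for x
    unfolding S_def c_def nn_def by (rule sigma_hat_facts(2))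
  have Sv: "S *v x = T *v (c *\<^sub>R (X *v x))" for x
    unfolding S_def c_def nn_def T_def by (rule sigma_hat_facts(3))
  have Av: "A *v x = S *v x + lam *\<^sub>R x" for x
    by (simp add: A_def matrix_vector_mult_add_rdistrib scaleR_matrix_vector_assoc[symmetric])
  have Ainj: "x = 0" if "A *v x = 0" for x
  proof -
    have "x \<bullet> (A *v x) = 0" using that by simp
    then have "c * ((X *v x) \<bullet> (X *v x)) + lam * (x \<bullet> x) = 0"
      by (simp add: Av inner_add_right Squad)
    moreover have "c * ((X *v x) \<bullet> (X *v x)) \<ge> 0" using c by simp
    moreover have "x \<bullet> x \<ge> 0" by simp
    ultimately have "lam * (x \<bullet> x) = 0" using lam
      by (smt (verit) mult_pos_pos zero_le_mult_iff)
    then show ?thesis using lam by simp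
  qed
  have Ainv: "invertible A"
    using Ainj by (simp add: invertible_left_inverse matrix_left_invertible_ker)
  have AiA: "Ai ** A = mat 1" "A ** Ai = mat 1"
    using matrix_inv_both[OF Ainv] by (auto simp: Ai_def)
  have Asym: "transpose A = A" unfolding A_def
    by (simp add: transpose_add' transpose_scalar Ssym)
  have Aisym: "transpose Ai = Ai"
  proof -
    have "transpose Ai ** A = mat 1"
      using arg_cong[OF AiA(2), of transpose] by (simp add: matrix_transpose_mul Asym)
    have "transpose Ai = transpose Ai ** (A ** Ai)" using AiA(2) by simp
    also have "\<dots> = (transpose Ai ** A) ** Ai" by (simp add: matrix_mul_assoc)
    finally show ?thesis using \<open>transpose Ai ** A = mat 1\<close> by simp
  qed
  have AiAv: "Ai *v (A *v x) = x" for x using AiA(1) by (simp add: matrix_vector_mul_assoc)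
  have AAiv: "A *v (Ai *v x) = x" for x using AiA(2) by (simp add: matrix_vector_mul_assoc)
  define m where "m = K *v (X *v \<beta>0)"
  have bh: "\<beta>hat \<omega> = m + K *v \<epsilon> \<omega>" for \<omega>
    unfolding \<beta>hat_def ridge_def Y_def m_def K_def
    by (simp add: S_def[symmetric] A_def[symmetric] Ai_def[symmetric] T_def[symmetric] c_def nn_def
        matrix_vector_mul_assoc[symmetric] matrix_vector_mult_scaleR matrix_vector_right_distrib
        scaleR_matrix_vector_assoc[symmetric] scaleR_right_distrib)
  have bhj: "\<beta>hat \<omega> $ j = m $ j + (\<Sum>i\<in>UNIV. K $ j $ i * \<epsilon> \<omega> $ i)" for \<omega> j
    by (simp add: bh matrix_vector_mult_def)
  have int1: "integrable M (\<lambda>\<omega>. \<epsilon> \<omega> $ i)" for i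
    by (rule square_integrable_imp_integrable[OF meas sq_int])
  have Ebh: "(\<integral>\<omega>. \<beta>hat \<omega> $ j \<partial>M) = m $ j" for j
    unfolding bhj using int1 mean0
    by (simp add: integral_add integrable_sum integral_sum prob_space)
  have Xth: "X *v \<theta> = X *v \<beta>0" unfolding \<theta>_def by (rule theta0_facts(1))
  have thT: "\<theta> = T *v (G *v (X *v \<beta>0))" unfolding \<theta>_def T_def G_def by (rule theta0_facts(2))
  define u where "u = Ai *v \<theta>"
  have mth: "m = \<theta> - lam *\<^sub>R u"
  proof -
    have "m = Ai *v (S *v \<theta>)"
      unfolding m_def K_def Sv
      by (simp add: matrix_vector_mul_assoc[symmetric] scaleR_matrix_vector_assoc[symmetric]
          matrix_vector_mult_scaleR Xth)
    also have "S *v \<theta> = A *v \<theta> - lam *\<^sub>R \<theta>" by (simp add: Av)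
    finally show ?thesis
      by (simp add: u_def matrix_vector_mult_diff_distrib AiAv matrix_vector_mult_scaleR)
  qed
  have Au: "A *v u = \<theta>" unfolding u_def by (rule AAiv)
  have uT: "u = T *v ((1/lam) *\<^sub>R (G *v (X *v \<beta>0) - c *\<^sub>R (X *v u)))"
  proof -
    have "lam *\<^sub>R u = \<theta> - S *v u" using Au by (simp add: Av algebra_simps)
    also have "\<dots> = T *v (G *v (X *v \<beta>0) - c *\<^sub>R (X *v u))"
      by (simp add: thT Sv matrix_vector_mult_diff_distrib)
    finally have "lam *\<^sub>R u = T *v (G *v (X *v \<beta>0) - c *\<^sub>R (X *v u))" .
    moreover have "u = (1/lam) *\<^sub>R (lam *\<^sub>R u)" using lam by simp
    ultimately have "u = (1/lam) *\<^sub>R (T *v (G *v (X *v \<beta>0) - c *\<^sub>R (X *v u)))"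
      by metis
    then show ?thesis by (simp add: matrix_vector_mult_scaleR)
  qed
  define \<mu> where "\<mu> = lambda_min_nz S"
  have nu: "lam * norm u \<le> lam * norm \<theta> * inverse \<mu>"
  proof (cases "u = 0")
    case True
    then have "\<theta> = 0" using Au by simp
    then show ?thesis using True by simp
  next
    case False
    obtain ce where ce0: "ce \<noteq> 0" and ceig: "is_eigenvalue S ce"
      and cb: "ce * (u \<bullet> u) \<le> u \<bullet> (S *v u)"
      using rayleigh[OF uT[unfolded T_def] False] unfolding S_def by blast
    let ?Ev = "{\<mu>. \<mu> \<noteq> 0 \<and> is_eigenvalue S \<mu>}"
    have finEv: "finite ?Ev"
      by (rule finite_subset[OF _ eigen_finite[OF Ssym]]) auto
    have ceEv: "ce \<in> ?Ev" using ce0 ceig by simp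
    have muEv: "\<mu> \<in> ?Ev" unfolding \<mu>_def lambda_min_nz_def using finEv ceEv
      by (intro Min_in) auto
    have mule: "\<mu> \<le> ce" unfolding \<mu>_def lambda_min_nz_def using finEv ceEv by (intro Min_le) auto
    have mupos: "\<mu> > 0"
    proof -
      obtain v where v: "v \<noteq> 0" "S *v v = \<mu> *\<^sub>R v" using muEv unfolding is_eigenvalue_def by auto
      have "\<mu> * (v \<bullet> v) = v \<bullet> (S *v v)" using v by simp
      also have "\<dots> \<ge> 0" using Squad c by simp
      finally have "\<mu> * (v \<bullet> v) \<ge> 0" .
      moreover have "v \<bullet> v > 0" using v by simp
      ultimately have "\<mu> \<ge> 0" by (simp add: zero_le_mult_iff)
      then show ?thesis using muEv by auto
    qed
    have "\<mu> * (u \<bullet> u) \<le> u \<bullet> (S *v u)"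
      using cb mule by (meson inner_ge_zero mult_right_mono order_trans)
    also have "\<dots> \<le> u \<bullet> (S *v u) + lam * (u \<bullet> u)" using lam by simp
    also have "\<dots> = u \<bullet> (S *v u + lam *\<^sub>R u)" by (simp add: inner_add_right)
    also have "\<dots> = u \<bullet> \<theta>" using Au by (simp add: Av)
    also have "\<dots> \<le> norm u * norm \<theta>" by (rule norm_cauchy_schwarz)
    finally have "\<mu> * (norm u * norm u) \<le> norm u * norm \<theta>"
      by (simp add: power2_norm_eq_inner[symmetric] power2_eq_square)
    then have "\<mu> * norm u \<le> norm \<theta>" using False by (simp add: mult.left_commute)
    then have "norm u \<le> norm \<theta> * inverse \<mu>" using mupos by (simp add: field_simps)
    then show ?thesis using lam by (simp add: mult.assoc)
  qed
  have bias: "Max (range (\<lambda>j. \<bar>(\<integral>\<omega>. \<beta>hat \<omega> $ j \<partial>M) - theta0 X \<beta>0 $ j\<bar>))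
           \<le> lam * norm (theta0 X \<beta>0) * inverse (lambda_min_nz (Sigma_hat X))"
  proof (subst Max_le_iff, simp, simp, clarify)
    fix j
    have "\<bar>(\<integral>\<omega>. \<beta>hat \<omega> $ j \<partial>M) - \<theta> $ j\<bar> = lam * \<bar>u $ j\<bar>"
      using lam by (simp add: Ebh mth abs_mult)
    also have "\<dots> \<le> lam * norm u" using lam component_le_norm_cart by (simp add: mult_left_mono)
    finally show "\<bar>(\<integral>\<omega>. \<beta>hat \<omega> $ j \<partial>M) - theta0 X \<beta>0 $ j\<bar>
           \<le> lam * norm (theta0 X \<beta>0) * inverse (lambda_min_nz (Sigma_hat X))"
      using nu unfolding \<theta>_def \<mu>_def S_def by simp
  qed
  have var': "(\<integral>\<omega>. (\<epsilon> \<omega> $ i)\<^sup>2 \<partial>M) = \<sigma>\<^sup>2" for i using var[of i] mean0[of i] by simp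
  have KK: "K ** transpose K = c *\<^sub>R Omega X lam"
    unfolding K_def Omega_def S_def[symmetric] A_def[symmetric] Ai_def[symmetric]
    by (simp add: matrix_transpose_mul transpose_scalar Aisym S_def Sigma_hat_def T_def
        c_def nn_def matrix_scalar_ac scalar_matrix_assoc[symmetric] matrix_mul_assoc)
  have Vj: "(\<integral>\<omega>. (\<beta>hat \<omega> $ j - (\<integral>\<omega>'. \<beta>hat \<omega>' $ j \<partial>M))\<^sup>2 \<partial>M) =
        \<sigma>\<^sup>2 * Omega X lam $ j $ j / nn" for j
  proof -
    have "(\<integral>\<omega>. (\<beta>hat \<omega> $ j - (\<integral>\<omega>'. \<beta>hat \<omega>' $ j \<partial>M))\<^sup>2 \<partial>M) =
        (\<integral>\<omega>. (\<Sum>i\<in>UNIV. K $ j $ i * \<epsilon> \<omega> $ i)\<^sup>2 \<partial>M)"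
      by (simp only: Ebh) (simp add: bhj)
    also have "\<dots> = \<sigma>\<^sup>2 * (\<Sum>i\<in>UNIV. (K $ j $ i)\<^sup>2)"
      by (rule var_lin[OF \<open>prob_space M\<close> meas indep sq_int mean0 var'])
    also have "(\<Sum>i\<in>UNIV. (K $ j $ i)\<^sup>2) = (K ** transpose K) $ j $ j"
      by (simp add: matrix_matrix_mult_def transpose_def power2_eq_square)
    also have "\<dots> = Omega X lam $ j $ j / nn" by (simp add: KK c_def)
    finally show ?thesis by simp
  qed
  have fin: "finite (range (\<lambda>j::'p. Omega X lam $ j $ j))" by simp
  have variance: "Min (range (\<lambda>j. (\<integral>\<omega>. (\<beta>hat \<omega> $ j - (\<integral>\<omega>'. \<beta>hat \<omega>' $ j \<partial>M))\<^sup>2 \<partial>M)))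
           \<ge> \<sigma>\<^sup>2 * Omega_min X lam / real CARD('n)"
  proof (subst Min_ge_iff, simp, simp, clarify)
    fix j
    have "Omega_min X lam \<le> Omega X lam $ j $ j" unfolding Omega_min_def
      using fin by (intro Min_le) auto
    then have "\<sigma>\<^sup>2 * Omega_min X lam / nn \<le> \<sigma>\<^sup>2 * Omega X lam $ j $ j / nn"
      using nn by (intro divide_right_mono mult_left_mono) auto
    then show "\<sigma>\<^sup>2 * Omega_min X lam / real CARD('n)
         \<le> (\<integral>\<omega>. (\<beta>hat \<omega> $ j - (\<integral>\<omega>'. \<beta>hat \<omega>' $ j \<partial>M))\<^sup>2 \<partial>M)"
      using Vj nn_def by simp
  qed
  show ?thesis using bias variance by blast
qed


end
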